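(* Assume in addition that $\mathbb{X}_f$ contains an open neighborhood of the origin and that $\mathbb{X}$ is compact. Then $V$ is a Lyapunov function on $\mathbb{X}$ for the closed-loop system $x^+=f(x,\kappa(x))$. That is, $\mathbb{X}$ is invariant under the closed loop, and there are class $\mathcal{K}_\infty$ functions $\alpha_1,\beta$ with $\alpha_1(|x|)\le V(x)\le\beta(|x|)$ and $V(f(x,\kappa(x)))\le V(x)-\alpha_1(|x|)$ for all $x\in\mathbb{X}$. Consequently the origin is asymptotically stable for the closed-loop system $x^+=f(x,\kappa(x))$ on $\mathbb{X}$.
   Context: Consider the discrete-time controlled system $x^+=f(x,u)$ with state $x\in\mathbb{R}^{n}$ and control $u\in\mathbb{R}^{m}$, constraint sets $\mathbb{X}\subset\mathbb{R}^n$, $\mathbb{U}\subset\mathbb{R}^m$, $\mathbb{Y}\subset\mathbb{R}^p$, and a constraint function $h(x,u)\in\mathbb{R}^p$. A control $u$ is feasible at $x\in\mathbb{X}$ if $u\in\mathbb{U}$, $f(x,u)\in\mathbb{X}$ and $h(x,u)\in\mathbb{Y}$. A control sequence $(u(0),\ldots,u(N-1))$ is feasible from $x$ if, for the state sequence defined by $x(0)=x$ and $x(k+1)=f(x(k),u(k))$, each $u(k)$ is feasible at $x(k)$. We are given a stage cost $l(x,u)$, a terminal set $\mathbb{X}_f$ and a terminal cost $V_f$ defined on $\mathbb{X}_f$. Horizon-$N$ problem at $x$: minimize $\sum_{k=0}^{N-1}l(x(k),u(k))+V_f(x(N))$ over control sequences that are feasible from $x$ and satisfy $x(N)\in\mathbb{X}_f$.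 Let $V_N^0(x)$ be its minimum value, which is assumed to be attained whenever the feasible set is nonempty. Let $(u^0_N(0),\ldots,u^0_N(N-1))$ be a minimizer, and set $\kappa_N(x)=u_N^0(0)$. For $N=0$, $V_0^0(x)=V_f(x)$ for $x\in\mathbb{X}_f$. Standing assumptions: (A1) $f,l,h,V_f$ are continuous on an open set containing $\mathbb{X}\times\mathbb{U}$ (for $V_f$, an open set containing $\mathbb{X}_f$). The stage cost $l$ is nonnegative definite in $(x,u)$ and positive definite in $u$. $V_f$ is positive definite on $\mathbb{X}_f$. Moreover $f(0,0)=0$, $l(0,0)=0$ and $V_f(0)=0$. (A2) $\mathbb{X}$ and $\mathbb{X}_f$ are closed, $\mathbb{X}_f\subset\mathbb{X}$, $\mathbb{U}$ is compact, and $\mathbb{X},\mathbb{X}_f,\mathbb{U}$ each contain a neighborhood of the origin. (A3) For every $x\in\mathbb{X}_f$ there is a control $u$ feasible at $x$ with $f(x,u)\in\mathbb{X}_f$ and $l(x,u)+V_f(f(x,u))\le V_f(x)$. (A4) For every $x\in\mathbb{X}$ there exist an integer $N\ge0$ and a feasible control sequence of length $N$ from $x$ whose state sequence satisfies $x(N)\in\mathbb{X}_f$. For $x\in\mathbb{X}$, $N(x)$ denotes the minimum such $N$. (A5) There is an integer $M\ge 0$ with $N(x)\le M$ for all $x\in\mathbb{X}$. (A6) There are class $\mathcal{K}_\infty$ functions $\alpha_1,\alpha_2$ with $l(x,u)\ge\alpha_1(|x|)$ for all $x\in\mathbb{X}$, $u\in\mathbb{U}$, and $V_f(x)\le\alpha_2(|x|)$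 for all $x\in\mathbb{X}_f$. Define $V(x)=V^0_{N(x)}(x)$ for $x\in\mathbb{X}$. For $N(x)\ge1$ set $\kappa(x)=\kappa_{N(x)}(x)$. For $N(x)=0$ (equivalently $x\in\mathbb{X}_f$), let $\kappa(x)$ be a feasible control $u$ as in (A3). *)

theory Defs
  imports "HOL-Analysis.Analysis"
begin

definition class_K_inf :: "(real \<Rightarrow> real) \<Rightarrow> bool" where
  "class_K_inf \<alpha> \<longleftrightarrow> continuous_on {0..} \<alpha> \<and> \<alpha> 0 = 0 \<and> strict_mono_on {0..} \<alpha>
     \<and> filterlim \<alpha> at_top at_top"

primrec traj :: "('x \<Rightarrow> 'u \<Rightarrow> 'x) \<Rightarrow> 'x \<Rightarrow> (nat \<Rightarrow> 'u) \<Rightarrow> nat \<Rightarrow> 'x" where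
  "traj f x us 0 = x"
| "traj f x us (Suc k) = f (traj f x us k) (us k)"

definition feasible_ctrl ::
  "('x \<Rightarrow> 'u \<Rightarrow> 'x) \<Rightarrow> ('x \<Rightarrow> 'u \<Rightarrow> 'y) \<Rightarrow> 'x set \<Rightarrow> 'u set \<Rightarrow> 'y set \<Rightarrow> 'x \<Rightarrow> 'u \<Rightarrow> bool" where
  "feasible_ctrl f h X U Y x u \<longleftrightarrow> u \<in> U \<and> f x u \<in> X \<and> h x u \<in> Y"

definition feasible_seq ::
  "('x \<Rightarrow> 'u \<Rightarrow> 'x) \<Rightarrow> ('x \<Rightarrow> 'u \<Rightarrow> 'y) \<Rightarrow> 'x set \<Rightarrow> 'u set \<Rightarrow> 'y set \<Rightarrow> nat \<Rightarrow> 'x \<Rightarrow> (nat \<Rightarrow> 'u) \<Rightarrow> bool" where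
  "feasible_seq f h X U Y N x us \<longleftrightarrow> (\<forall>k<N. feasible_ctrl f h X U Y (traj f x us k) (us k))"

definition admissible ::
  "('x \<Rightarrow> 'u \<Rightarrow> 'x) \<Rightarrow> ('x \<Rightarrow> 'u \<Rightarrow> 'y) \<Rightarrow> 'x set \<Rightarrow> 'u set \<Rightarrow> 'y set \<Rightarrow> 'x set \<Rightarrow> nat \<Rightarrow> 'x \<Rightarrow> (nat \<Rightarrow> 'u) \<Rightarrow> bool" where
  "admissible f h X U Y Xf N x us \<longleftrightarrow> feasible_seq f h X U Y N x us \<and> traj f x us N \<in> Xf"

definition cost ::
  "('x \<Rightarrow> 'u \<Rightarrow> 'x) \<Rightarrow> ('x \<Rightarrow> 'u \<Rightarrow> real) \<Rightarrow> ('x \<Rightarrow> real) \<Rightarrow> nat \<Rightarrow> 'x \<Rightarrow> (nat \<Rightarrow> 'u) \<Rightarrow> real" where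
  "cost f l Vf N x us = (\<Sum>k<N. l (traj f x us k) (us k)) + Vf (traj f x us N)"

text \<open>Optimal value V_N^0 (the minimum, assumed attained).\<close>
definition VN ::
  "('x \<Rightarrow> 'u \<Rightarrow> 'x) \<Rightarrow> ('x \<Rightarrow> 'u \<Rightarrow> 'y) \<Rightarrow> ('x \<Rightarrow> 'u \<Rightarrow> real) \<Rightarrow> ('x \<Rightarrow> real) \<Rightarrow>
   'x set \<Rightarrow> 'u set \<Rightarrow> 'y set \<Rightarrow> 'x set \<Rightarrow> nat \<Rightarrow> 'x \<Rightarrow> real" where
  "VN f h l Vf X U Y Xf N x = Inf (cost f l Vf N x ` {us. admissible f h X U Y Xf N x us})"

definition Nmin ::
  "('x \<Rightarrow> 'u \<Rightarrow> 'x) \<Rightarrow> ('x \<Rightarrow> 'u \<Rightarrow> 'y) \<Rightarrow> 'x set \<Rightarrow> 'u set \<Rightarrow> 'y set \<Rightarrow> 'x set \<Rightarrow> 'x \<Rightarrow> nat" where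
  "Nmin f h X U Y Xf x = (LEAST N. \<exists>us. admissible f h X U Y Xf N x us)"

definition Vfun ::
  "('x \<Rightarrow> 'u \<Rightarrow> 'x) \<Rightarrow> ('x \<Rightarrow> 'u \<Rightarrow> 'y) \<Rightarrow> ('x \<Rightarrow> 'u \<Rightarrow> real) \<Rightarrow> ('x \<Rightarrow> real) \<Rightarrow>
   'x set \<Rightarrow> 'u set \<Rightarrow> 'y set \<Rightarrow> 'x set \<Rightarrow> 'x \<Rightarrow> real" where
  "Vfun f h l Vf X U Y Xf x = VN f h l Vf X U Y Xf (Nmin f h X U Y Xf x) x"

definition asymp_stable_on :: "('x::real_normed_vector \<Rightarrow> 'x) \<Rightarrow> 'x set \<Rightarrow> bool" where
  "asymp_stable_on g X \<longleftrightarrow>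
     (\<forall>\<epsilon>>0. \<exists>\<delta>>0. \<forall>x\<in>X. norm x < \<delta> \<longrightarrow> (\<forall>k. norm ((g ^^ k) x) < \<epsilon>)) \<and>
     (\<forall>x\<in>X. (\<lambda>k. (g ^^ k) x) \<longlonglongrightarrow> 0)"

end

theory Submission
  imports Defs
begin


lemma traj_cong: "(\<forall>k<n. us k = vs k) \<Longrightarrow> traj f x us n = traj f x vs n"
  by (induction n) auto

lemma traj_shift: "traj f (f x (us 0)) (\<lambda>k. us (Suc k)) k = traj f x us (Suc k)"
  by (induction k) auto

locale mpc =
  fixes f :: "'x::euclidean_space \<Rightarrow> 'u::euclidean_space \<Rightarrow> 'x"
    and h :: "'x \<Rightarrow> 'u \<Rightarrow> 'y::euclidean_space"
    and l :: "'x \<Rightarrow> 'u \<Rightarrow> real"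
    and Vf :: "'x \<Rightarrow> real"
    and X Xf :: "'x set" and U :: "'u set" and Y :: "'y set"
  assumes l_nonneg: "\<forall>x\<in>X. \<forall>u\<in>U. l x u \<ge> 0"
    and Vf_pos: "\<forall>x\<in>Xf. x \<noteq> 0 \<longrightarrow> Vf x > 0"
    and Vf0: "Vf 0 = 0"
    and XfX: "Xf \<subseteq> X"
    and A3: "\<forall>x\<in>Xf. \<exists>u. feasible_ctrl f h X U Y x u \<and> f x u \<in> Xf \<and> l x u + Vf (f x u) \<le> Vf x"
    and A4: "\<forall>x\<in>X. \<exists>N us. admissible f h X U Y Xf N x us"
    and attained: "\<forall>N. \<forall>x\<in>X. (\<exists>us. admissible f h X U Y Xf N x us) \<longrightarrow>
                     (\<exists>us. admissible f h X U Y Xf N x us \<and>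
                        (\<forall>vs. admissible f h X U Y Xf N x vs \<longrightarrow> cost f l Vf N x us \<le> cost f l Vf N x vs))"
begin

abbreviation "adm \<equiv> admissible f h X U Y Xf"
abbreviation "cst \<equiv> cost f l Vf"
abbreviation "VV \<equiv> VN f h l Vf X U Y Xf"
abbreviation "Nm \<equiv> Nmin f h X U Y Xf"
abbreviation "V \<equiv> Vfun f h l Vf X U Y Xf"

lemma feas_X: "x \<in> X \<Longrightarrow> feasible_seq f h X U Y N x us \<Longrightarrow> k \<le> N \<Longrightarrow> traj f x us k \<in> X"
  by (cases k) (auto simp: feasible_seq_def feasible_ctrl_def)

lemma feas_U: "feasible_seq f h X U Y N x us \<Longrightarrow> k < N \<Longrightarrow> us k \<in> U"
  by (auto simp: feasible_seq_def feasible_ctrl_def)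

lemma Vf_nonneg: "x \<in> Xf \<Longrightarrow> Vf x \<ge> 0"
  using Vf_pos Vf0 by (cases "x = 0") (auto intro: less_imp_le)

lemma cost_nonneg: assumes "x \<in> X" "adm N x us" shows "cst N x us \<ge> 0"
proof -
  have "(\<Sum>k<N. l (traj f x us k) (us k)) \<ge> 0"
    using assms feas_X feas_U l_nonneg by (intro sum_nonneg) (auto simp: admissible_def)
  moreover have "Vf (traj f x us N) \<ge> 0" using assms Vf_nonneg by (auto simp: admissible_def)
  ultimately show ?thesis by (simp add: cost_def)
qed

lemma VN_le: assumes "x \<in> X" "adm N x us" shows "VV N x \<le> cst N x us"
  unfolding VN_def
proof (rule cInf_lower)
  show "cst N x us \<in> cst N x ` {us. adm N x us}" using assms by auto
  show "bdd_below (cst N x ` {us. adm N x us})"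
    using cost_nonneg[OF assms(1)] by (intro bdd_belowI[where m=0]) auto
qed

lemma VN_opt: assumes "x \<in> X" "adm N x us" shows "\<exists>ws. adm N x ws \<and> VV N x = cst N x ws"
proof -
  obtain ws where ws: "adm N x ws" "\<And>vs. adm N x vs \<Longrightarrow> cst N x ws \<le> cst N x vs"
    using attained assms by blast
  have "VV N x = cst N x ws" unfolding VN_def
    by (rule cInf_eq_minimum) (use ws in auto)
  with ws show ?thesis by blast
qed

lemma VN_nonneg: assumes "x \<in> X" "adm N x us" shows "VV N x \<ge> 0"
  using VN_opt[OF assms] cost_nonneg[OF assms(1)] by fastforce

lemma extend: assumes "x \<in> X" "adm N x us"
  shows "\<exists>vs. adm (Suc N) x vs \<and> cst (Suc N) x vs \<le> cst N x us"
proof -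
  let ?y = "traj f x us N"
  have y: "?y \<in> Xf" using assms by (auto simp: admissible_def)
  then obtain u where u: "feasible_ctrl f h X U Y ?y u" "f ?y u \<in> Xf" "l ?y u + Vf (f ?y u) \<le> Vf ?y"
    using A3 by blast
  define vs where "vs = us(N := u)"
  have tr: "traj f x vs k = traj f x us k" if "k \<le> N" for k
    using that by (intro traj_cong) (auto simp: vs_def)
  have fs: "feasible_seq f h X U Y (Suc N) x vs"
    unfolding feasible_seq_def
  proof (intro allI impI)
    fix k assume "k < Suc N"
    then consider "k < N" | "k = N" by linarith
    then show "feasible_ctrl f h X U Y (traj f x vs k) (vs k)"
    proof cases
      case 1 then show ?thesis using assms(2) tr[of k] by (auto simp: admissible_def feasible_seq_def vs_def)
    next
      case 2 then show ?thesis using u tr[of N] by (auto simp: vs_def)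
    qed
  qed
  have tN: "traj f x vs (Suc N) = f ?y u" using tr[of N] by (simp add: vs_def)
  have sm: "(\<Sum>k<N. l (traj f x vs k) (vs k)) = (\<Sum>k<N. l (traj f x us k) (us k))"
    using tr by (intro sum.cong) (auto simp: vs_def)
  have "cst (Suc N) x vs = (\<Sum>k<N. l (traj f x us k) (us k)) + l ?y u + Vf (f ?y u)"
    unfolding cost_def using sm tN tr[of N] by (simp add: vs_def)
  also have "\<dots> \<le> cst N x us" using u(3) by (simp add: cost_def)
  finally show ?thesis using fs tN u(2) by (auto simp: admissible_def)
qed

lemma VN_mono: assumes "x \<in> X" "adm N x us"
  shows "(\<exists>vs. adm (N + j) x vs) \<and> VV (N + j) x \<le> VV N x"
proof (induction j)
  case 0 then show ?case using assms by auto
next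
  case (Suc j)
  then obtain vs where vs: "adm (N + j) x vs" by blast
  obtain ws where ws: "adm (N + j) x ws" "VV (N + j) x = cst (N + j) x ws"
    using VN_opt[OF assms(1) vs] by blast
  obtain zs where zs: "adm (Suc (N + j)) x zs" "cst (Suc (N + j)) x zs \<le> cst (N + j) x ws"
    using extend[OF assms(1) ws(1)] by blast
  have "VV (Suc (N + j)) x \<le> cst (Suc (N + j)) x zs" by (rule VN_le[OF assms(1) zs(1)])
  with zs ws Suc show ?case by auto
qed

lemma Nm_adm: assumes "x \<in> X" shows "\<exists>us. adm (Nm x) x us"
proof -
  have "\<exists>N. \<exists>us. adm N x us" using A4 assms by blast
  then show ?thesis unfolding Nmin_def by (rule LeastI_ex[of "\<lambda>N. \<exists>us. adm N x us"])
qed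

lemma Nm_le: assumes "adm N x us" shows "Nm x \<le> N"
proof -
  have "\<exists>us. adm N x us" using assms by blast
  then show ?thesis unfolding Nmin_def by (rule Least_le[of "\<lambda>N. \<exists>us. adm N x us"])
qed

lemma traj_cons: "traj f x (case_nat u vs) (Suc k) = traj f (f x u) vs k"
  using traj_shift[of f x "case_nat u vs" k] by simp

lemma cons_adm: assumes "feasible_ctrl f h X U Y x u" "adm j (f x u) vs"
  shows "adm (Suc j) x (case_nat u vs)"
  unfolding admissible_def feasible_seq_def
proof (intro conjI allI impI)
  fix k assume "k < Suc j"
  then show "feasible_ctrl f h X U Y (traj f x (case_nat u vs) k) (case_nat u vs k)"
  proof (cases k)
    case 0 then show ?thesis using assms by simp
  next
    case (Suc k')
    have e1: "traj f x (case_nat u vs) k = traj f (f x u) vs k'" unfolding Suc by (rule traj_cons)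
    have e2: "case_nat u vs k = vs k'" using Suc by simp
    have "k' < j" using Suc \<open>k < Suc j\<close> by simp
    then have "feasible_ctrl f h X U Y (traj f (f x u) vs k') (vs k')"
      using assms(2) unfolding admissible_def feasible_seq_def by blast
    then show ?thesis unfolding e1 e2 .
  qed
next
  show "traj f x (case_nat u vs) (Suc j) \<in> Xf" using assms(2) by (simp only: traj_cons admissible_def)
qed

lemma adm0: "adm 0 x us \<longleftrightarrow> x \<in> Xf"
  by (simp add: admissible_def feasible_seq_def)

lemma VN0: assumes "x \<in> Xf" shows "VV 0 x = Vf x"
proof -
  have "cst 0 x ` {us. adm 0 x us} = {Vf x}" using assms by (auto simp: adm0 cost_def)
  then show ?thesis by (simp add: VN_def)
qed

lemma Nm0: assumes "x \<in> X" shows "Nm x = 0 \<longleftrightarrow> x \<in> Xf"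
proof
  assume "Nm x = 0" then show "x \<in> Xf" using Nm_adm[OF assms] by (auto simp: adm0)
next
  assume "x \<in> Xf" then show "Nm x = 0" using Nm_le[of 0 x "\<lambda>_. undefined"] by (simp add: adm0)
qed

lemma V_Xf: assumes "x \<in> Xf" shows "V x = Vf x"
proof -
  have "x \<in> X" using XfX assms by auto
  then have "Nm x = 0" using Nm0 assms by blast
  then show ?thesis using assms by (simp add: Vfun_def VN0)
qed

lemma V_nonneg: "x \<in> X \<Longrightarrow> V x \<ge> 0"
  using Nm_adm VN_nonneg by (auto simp: Vfun_def)

lemma tail: assumes "adm (Suc N) x us"
  shows "adm N (f x (us 0)) (\<lambda>k. us (Suc k)) \<and>
         cst (Suc N) x us = l x (us 0) + cst N (f x (us 0)) (\<lambda>k. us (Suc k))"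
proof -
  have sh: "(\<Sum>k<Suc N. l (traj f x us k) (us k)) = l x (us 0) + (\<Sum>k<N. l (traj f x us (Suc k)) (us (Suc k)))"
    by (subst sum.lessThan_Suc_shift) simp
  show ?thesis using assms unfolding cost_def sh
    by (auto simp: admissible_def feasible_seq_def traj_shift simp del: sum.lessThan_Suc)
qed

end


lemma K_mono: "class_K_inf a \<Longrightarrow> 0 \<le> s \<Longrightarrow> s \<le> t \<Longrightarrow> a s \<le> a t"
  unfolding class_K_inf_def
  by (cases "s = t") (auto intro!: less_imp_le strict_mono_onD[of "{0..}" a])

lemma K_nonneg: "class_K_inf a \<Longrightarrow> 0 \<le> s \<Longrightarrow> 0 \<le> a s"
  using K_mono[of a 0 s] by (simp add: class_K_inf_def)

lemma K_less: "class_K_inf a \<Longrightarrow> 0 \<le> s \<Longrightarrow> 0 \<le> t \<Longrightarrow> a s < a t \<Longrightarrow> s < t"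
  using K_mono[of a t s] by force

lemma K_pos: "class_K_inf a \<Longrightarrow> 0 < s \<Longrightarrow> 0 < a s"
  unfolding class_K_inf_def using strict_mono_onD[of "{0..}" a 0 s] by auto

theorem proposition4:
  fixes f :: "'x::euclidean_space \<Rightarrow> 'u::euclidean_space \<Rightarrow> 'x"
    and h :: "'x \<Rightarrow> 'u \<Rightarrow> 'y::euclidean_space"
    and l :: "'x \<Rightarrow> 'u \<Rightarrow> real"
    and Vf :: "'x \<Rightarrow> real"
    and X Xf :: "'x set" and U :: "'u set" and Y :: "'y set"
    and \<alpha>1 \<alpha>2 :: "real \<Rightarrow> real"
    and \<kappa> :: "'x \<Rightarrow> 'u"
  assumes A1_cont: "\<exists>S. open S \<and> X \<times> U \<subseteq> S \<and> continuous_on S (\<lambda>(x, u). f x u)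
                     \<and> continuous_on S (\<lambda>(x, u). l x u) \<and> continuous_on S (\<lambda>(x, u). h x u)"
    and A1_Vf_cont: "\<exists>T. open T \<and> Xf \<subseteq> T \<and> continuous_on T Vf"
    and A1_l_nonneg: "\<forall>x\<in>X. \<forall>u\<in>U. l x u \<ge> 0"
    and A1_l_pos_u: "\<forall>x\<in>X. \<forall>u\<in>U. u \<noteq> 0 \<longrightarrow> l x u > 0"
    and A1_Vf_pos: "\<forall>x\<in>Xf. x \<noteq> 0 \<longrightarrow> Vf x > 0"
    and A1_zero: "f 0 0 = 0" "l 0 0 = 0" "Vf 0 = 0"
    and A2: "closed X" "closed Xf" "Xf \<subseteq> X" "compact U"
            "0 \<in> interior X" "0 \<in> interior Xf" "0 \<in> interior U"
    and A3: "\<forall>x\<in>Xf. \<exists>u. feasible_ctrl f h X U Y x u \<and> f x u \<in> Xf \<and> l x u + Vf (f x u) \<le> Vf x"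
    and A4: "\<forall>x\<in>X. \<exists>N us. admissible f h X U Y Xf N x us"
    and A5: "\<exists>M. \<forall>x\<in>X. Nmin f h X U Y Xf x \<le> M"
    and A6: "class_K_inf \<alpha>1" "class_K_inf \<alpha>2"
            "\<forall>x\<in>X. \<forall>u\<in>U. l x u \<ge> \<alpha>1 (norm x)"
            "\<forall>x\<in>Xf. Vf x \<le> \<alpha>2 (norm x)"
    and attained: "\<forall>N. \<forall>x\<in>X. (\<exists>us. admissible f h X U Y Xf N x us) \<longrightarrow>
                     (\<exists>us. admissible f h X U Y Xf N x us \<and>
                        (\<forall>vs. admissible f h X U Y Xf N x vs \<longrightarrow> cost f l Vf N x us \<le> cost f l Vf N x vs))"
    and kappa_opt: "\<forall>x\<in>X. Nmin f h X U Y Xf x \<ge> 1 \<longrightarrow>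
                     (\<exists>us. admissible f h X U Y Xf (Nmin f h X U Y Xf x) x us \<and>
                        cost f l Vf (Nmin f h X U Y Xf x) x us = VN f h l Vf X U Y Xf (Nmin f h X U Y Xf x) x \<and>
                        us 0 = \<kappa> x)"
    and kappa_term: "\<forall>x\<in>X. Nmin f h X U Y Xf x = 0 \<longrightarrow>
                     feasible_ctrl f h X U Y x (\<kappa> x) \<and> f x (\<kappa> x) \<in> Xf \<and>
                     l x (\<kappa> x) + Vf (f x (\<kappa> x)) \<le> Vf x"
    and Xf_open_nbhd: "\<exists>W. open W \<and> 0 \<in> W \<and> W \<subseteq> Xf"
    and X_compact: "compact X"
  shows "(\<forall>x\<in>X. f x (\<kappa> x) \<in> X) \<and>
         (\<exists>\<beta>. class_K_inf \<beta> \<and>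
            (\<forall>x\<in>X. \<alpha>1 (norm x) \<le> Vfun f h l Vf X U Y Xf x \<and>
                    Vfun f h l Vf X U Y Xf x \<le> \<beta> (norm x) \<and>
                    Vfun f h l Vf X U Y Xf (f x (\<kappa> x)) \<le> Vfun f h l Vf X U Y Xf x - \<alpha>1 (norm x))) \<and>
         asymp_stable_on (\<lambda>x. f x (\<kappa> x)) X"
proof -
  interpret mpc f h l Vf X Xf U Y
    using A1_l_nonneg A1_Vf_pos A1_zero(3) A2(3) A3 A4 attained by (rule mpc.intro)
  define g where "g = (\<lambda>x. f x (\<kappa> x))"
  have step: "g x \<in> X \<and> V (g x) \<le> V x - \<alpha>1 (norm x)" if x: "x \<in> X" for x
  proof (cases "Nm x = 0")
    case True
    then have xf: "x \<in> Xf" using Nm0[OF x] by simp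
    have k: "feasible_ctrl f h X U Y x (\<kappa> x)" "f x (\<kappa> x) \<in> Xf" "l x (\<kappa> x) + Vf (f x (\<kappa> x)) \<le> Vf x"
      using kappa_term x True by auto
    have "\<alpha>1 (norm x) \<le> l x (\<kappa> x)" using A6(3) x k(1) by (auto simp: feasible_ctrl_def)
    then show ?thesis using k xf V_Xf[of x] V_Xf[of "g x"] XfX by (auto simp: g_def)
  next
    case False
    then obtain n where n: "Nm x = Suc n" by (cases "Nm x") auto
    obtain us where us: "adm (Suc n) x us" "cst (Suc n) x us = VV (Suc n) x" "us 0 = \<kappa> x"
      using kappa_opt x n by fastforce
    have gx: "g x \<in> X" using us(1) us(3) unfolding admissible_def feasible_seq_def feasible_ctrl_def g_def
      by (metis traj.simps(1) zero_less_Suc)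
    have u0: "\<kappa> x \<in> U" using us(1,3) feas_U[of "Suc n" x us 0] by (auto simp: admissible_def)
    have t: "adm n (g x) (\<lambda>k. us (Suc k))"
        "cst (Suc n) x us = l x (\<kappa> x) + cst n (g x) (\<lambda>k. us (Suc k))"
      using tail[OF us(1)] us(3) by (auto simp: g_def)
    have f0: "feasible_ctrl f h X U Y x (us 0)" using us(1) unfolding admissible_def feasible_seq_def
      by (metis traj.simps(1) zero_less_Suc)
    have Nle: "Nm (g x) \<le> n" by (rule Nm_le[OF t(1)])
    obtain vs where vs: "adm (Nm (g x)) (g x) vs" using Nm_adm[OF gx] by blast
    have "adm (Suc (Nm (g x))) x (case_nat (us 0) vs)"
      by (rule cons_adm[OF f0]) (use vs us(3) in \<open>simp add: g_def\<close>)
    then have "Nm x \<le> Suc (Nm (g x))" by (rule Nm_le)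
    then have Neq: "Nm (g x) = n" using Nle n by simp
    have "V (g x) = VV n (g x)" by (simp add: Vfun_def Neq)
    also have "\<dots> \<le> cst n (g x) (\<lambda>k. us (Suc k))" by (rule VN_le[OF gx t(1)])
    also have "\<dots> = V x - l x (\<kappa> x)" using t(2) us(2) n by (simp add: Vfun_def)
    also have "\<dots> \<le> V x - \<alpha>1 (norm x)" using A6(3) x u0 by auto
    finally show ?thesis using gx by simp
  qed
  have inv: "\<forall>x\<in>X. g x \<in> X" using step by blast
  have dec: "\<And>x. x \<in> X \<Longrightarrow> V (g x) \<le> V x - \<alpha>1 (norm x)" using step by blast
  have low: "\<alpha>1 (norm x) \<le> V x" if "x \<in> X" for x
    using dec[OF that] V_nonneg[of "g x"] inv that by auto
  obtain S where S: "open S" "X \<times> U \<subseteq> S" "continuous_on S (\<lambda>(x, u). l x u)" using A1_cont by blast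
  have "compact ((\<lambda>(x, u). l x u) ` (X \<times> U))"
    by (rule compact_continuous_image[OF continuous_on_subset[OF S(3) S(2)]])
      (simp add: compact_Times X_compact A2(4))
  then have "bounded ((\<lambda>(x, u). l x u) ` (X \<times> U))" by (rule compact_imp_bounded)
  then obtain Bl where Bl0: "Bl > 0" "\<forall>y\<in>(\<lambda>(x, u). l x u) ` (X \<times> U). norm y \<le> Bl"
    unfolding bounded_pos by blast
  have Bl: "Bl > 0" "\<And>x u. x \<in> X \<Longrightarrow> u \<in> U \<Longrightarrow> l x u \<le> Bl"
  proof -
    show "Bl > 0" by fact
    fix x u assume "x \<in> X" "u \<in> U"
    then have "l x u \<in> (\<lambda>(x, u). l x u) ` (X \<times> U)" by (auto intro: rev_image_eqI[of "(x,u)"])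
    then show "l x u \<le> Bl" using Bl0(2) by force
  qed
  obtain T where T: "open T" "Xf \<subseteq> T" "continuous_on T Vf" using A1_Vf_cont by blast
  have cXf: "compact Xf" using compact_Int_closed[OF X_compact A2(2)] A2(3) by (simp add: Int_absorb1)
  have "compact (Vf ` Xf)"
    by (rule compact_continuous_image[OF continuous_on_subset[OF T(3) T(2)] cXf])
  then have "bounded (Vf ` Xf)" by (rule compact_imp_bounded)
  then obtain BV where BV0: "BV > 0" "\<forall>y\<in>Vf ` Xf. norm y \<le> BV"
    unfolding bounded_pos by blast
  have BV: "BV > 0" "\<And>x. x \<in> Xf \<Longrightarrow> Vf x \<le> BV" using BV0 by force+
  obtain M where M: "\<forall>x\<in>X. Nm x \<le> M" using A5 by blast
  define C where "C = real M * Bl + BV"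
  have C: "C > 0" using Bl BV by (simp add: C_def add_nonneg_pos)
  have bound: "V x \<le> C" if x: "x \<in> X" for x
  proof -
    obtain us0 where "adm (Nm x) x us0" using Nm_adm[OF x] by blast
    then obtain us where us: "adm (Nm x) x us" "VV (Nm x) x = cst (Nm x) x us"
      using VN_opt[OF x] by blast
    have "(\<Sum>k<Nm x. l (traj f x us k) (us k)) \<le> (\<Sum>k<Nm x. Bl)"
      using us(1) feas_X[OF x] feas_U by (intro sum_mono Bl(2)) (auto simp: admissible_def)
    also have "\<dots> \<le> real M * Bl" using M x Bl(1) by simp
    finally have "(\<Sum>k<Nm x. l (traj f x us k) (us k)) \<le> real M * Bl" .
    moreover have "Vf (traj f x us (Nm x)) \<le> BV" using us(1) BV(2) by (auto simp: admissible_def)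
    ultimately show ?thesis using us(2) by (simp add: Vfun_def cost_def C_def)
  qed
  obtain W where W: "open W" "0 \<in> W" "W \<subseteq> Xf" using Xf_open_nbhd by blast
  obtain r where r0: "r > 0" "ball 0 r \<subseteq> W" by (rule openE[OF W(1) W(2)])
  have r: "r > 0" "ball 0 r \<subseteq> Xf" using r0 W(3) by auto
  define \<beta> where "\<beta> = (\<lambda>s. \<alpha>2 s + C * s / r)"
  have Kb: "class_K_inf \<beta>"
    unfolding class_K_inf_def
  proof (intro conjI)
    show "continuous_on {0..} \<beta>" using A6(2) r(1) unfolding \<beta>_def class_K_inf_def
      by (intro continuous_intros) auto
    show "\<beta> 0 = 0" using A6(2) by (simp add: \<beta>_def class_K_inf_def)
    show "strict_mono_on {0..} \<beta>"
    proof (rule strict_mono_onI)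
      fix a b :: real assume "a \<in> {0..}" "b \<in> {0..}" "a < b"
      moreover have "C * a / r \<le> C * b / r" using C r \<open>a < b\<close> by (simp add: divide_right_mono)
      ultimately show "\<beta> a < \<beta> b" using A6(2) strict_mono_onD[of "{0..}" \<alpha>2 a b]
        unfolding \<beta>_def class_K_inf_def by fastforce
    qed
    show "filterlim \<beta> at_top at_top"
    proof (rule filterlim_at_top_mono)
      show "filterlim \<alpha>2 at_top at_top" using A6(2) by (simp add: class_K_inf_def)
      show "\<forall>\<^sub>F x in at_top. \<alpha>2 x \<le> \<beta> x"
        using eventually_ge_at_top[of "0::real"] by eventually_elim (use C r in \<open>simp add: \<beta>_def\<close>)
    qed
  qed
  have up: "V x \<le> \<beta> (norm x)" if x: "x \<in> X" for x
  proof (cases "norm x < r")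
    case True
    then have "x \<in> Xf" using r by auto
    then have "V x \<le> \<alpha>2 (norm x)" using V_Xf A6(4) by simp
    moreover have "0 \<le> C * norm x / r" using C r by simp
    ultimately show ?thesis by (simp add: \<beta>_def)
  next
    case False
    have "C \<le> C * norm x / r" using False C r by (simp add: field_simps)
    then show ?thesis using bound[OF x] K_nonneg[OF A6(2), of "norm x"] by (simp add: \<beta>_def)
  qed
  have itX: "(g ^^ k) x \<in> X" if "x \<in> X" for x k
    using that inv by (induction k) auto
  have itV: "V ((g ^^ k) x) \<le> V x - (\<Sum>i<k. \<alpha>1 (norm ((g ^^ i) x)))" if x: "x \<in> X" for x k
  proof (induction k)
    case 0 then show ?case by simp
  next
    case (Suc k)
    have "V ((g ^^ Suc k) x) \<le> V ((g ^^ k) x) - \<alpha>1 (norm ((g ^^ k) x))"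
      using dec[OF itX[OF x, of k]] by simp
    with Suc show ?case by simp
  qed
  have itV1: "V ((g ^^ k) x) \<le> V x" if x: "x \<in> X" for x k
  proof -
    have "0 \<le> (\<Sum>i<k. \<alpha>1 (norm ((g ^^ i) x)))"
      by (rule sum_nonneg) (rule K_nonneg[OF A6(1) norm_ge_zero])
    then show ?thesis using itV[OF x, of k] by linarith
  qed
  have stab: "\<exists>\<delta>>0. \<forall>x\<in>X. norm x < \<delta> \<longrightarrow> (\<forall>k. norm ((g ^^ k) x) < \<epsilon>)" if e: "\<epsilon> > 0" for \<epsilon>
  proof -
    have a: "\<alpha>1 \<epsilon> > 0" using K_pos[OF A6(1) e] .
    from Kb have "continuous_on {0..} \<beta>" "\<beta> 0 = 0" by (auto simp: class_K_inf_def)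
    then obtain \<delta> where d: "\<delta> > 0" "\<And>s. s \<in> {0..} \<Longrightarrow> dist s 0 < \<delta> \<Longrightarrow> dist (\<beta> s) 0 < \<alpha>1 \<epsilon>"
      using a unfolding continuous_on_iff by (metis atLeast_iff order_refl)
    show ?thesis
    proof (intro exI conjI ballI impI allI)
      fix x k assume x: "x \<in> X" and nx: "norm x < \<delta>"
      have "\<beta> (norm x) < \<alpha>1 \<epsilon>" using d(2)[of "norm x"] nx by auto
      then have "\<alpha>1 (norm ((g ^^ k) x)) < \<alpha>1 \<epsilon>"
        using low[OF itX[OF x, of k]] itV1[OF x, of k] up[OF x] by linarith
      then show "norm ((g ^^ k) x) < \<epsilon>" by (rule K_less[OF A6(1) norm_ge_zero less_imp_le[OF e]])
    qed (use d in auto)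
  qed
  have attr: "(\<lambda>k. (g ^^ k) x) \<longlonglongrightarrow> 0" if x: "x \<in> X" for x
  proof -
    let ?a = "\<lambda>i. \<alpha>1 (norm ((g ^^ i) x))"
    have "summable ?a"
    proof (rule summableI_nonneg_bounded)
      show "\<And>n. 0 \<le> ?a n" using K_nonneg[OF A6(1)] by simp
      show "sum ?a {..<n} \<le> V x" for n using itV[OF x, of n] V_nonneg[OF itX[OF x, of n]] by linarith
    qed
    then have lim: "?a \<longlonglongrightarrow> 0" by (rule summable_LIMSEQ_zero)
    show ?thesis
    proof (rule LIMSEQ_I)
      fix e :: real assume e: "e > 0"
      then have "\<alpha>1 e > 0" using K_pos[OF A6(1)] by blast
      then obtain n0 where n0: "\<And>n. n \<ge> n0 \<Longrightarrow> norm (?a n - 0) < \<alpha>1 e"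
        using LIMSEQ_D[OF lim] by blast
      show "\<exists>n0. \<forall>n\<ge>n0. norm ((g ^^ n) x - 0) < e"
      proof (intro exI allI impI)
        fix n assume "n \<ge> n0"
        then have "?a n < \<alpha>1 e" using n0[of n] by simp
        then have "norm ((g ^^ n) x) < e" by (rule K_less[OF A6(1) norm_ge_zero less_imp_le[OF e]])
        then show "norm ((g ^^ n) x - 0) < e" by simp
      qed
    qed
  qed
  have as: "asymp_stable_on g X" unfolding asymp_stable_on_def using stab attr by blast
  have ex: "\<exists>\<beta>. class_K_inf \<beta> \<and>
            (\<forall>x\<in>X. \<alpha>1 (norm x) \<le> V x \<and> V x \<le> \<beta> (norm x) \<and> V (g x) \<le> V x - \<alpha>1 (norm x))"
    using Kb low up dec by blast
  have "(\<forall>x\<in>X. g x \<in> X) \<and> (\<exists>\<beta>. class_K_inf \<beta> \<and>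
            (\<forall>x\<in>X. \<alpha>1 (norm x) \<le> V x \<and> V x \<le> \<beta> (norm x) \<and> V (g x) \<le> V x - \<alpha>1 (norm x)))
        \<and> asymp_stable_on g X" using inv ex as by blast
  then show ?thesis unfolding g_def .
qed

end
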